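(* Let $(\mathcal{A},v)$ be a valued abelian group and $A_1,\dots,A_n$ subgroups of $\mathcal{A}$. The sum $A_1+\dots+A_n\subseteq\mathcal{A}$ is pseudo-direct if and only if the group homomorphism $f:A_1\times\dots\times A_n\to A_1+\dots+A_n$, $f(a_1,\dots,a_n)=a_1+\dots+a_n$, is immediate, where $A_1\times\dots\times A_n$ carries the minimum valuation $v(a_1,\dots,a_n)=\min_i va_i$ and $A_1+\dots+A_n$ the restriction of $v$.
   Context: A valued abelian group $(G,v)$ is an abelian group with a map $v$ onto $vG\cup\{\infty\}$ ($vG$ totally ordered, $\infty$ maximal) with $va=\infty$ iff $a=0$ and $v(a-b)\ge\min\{va,vb\}$; it is an ultrametric space via $u(a,b)=v(a-b)$. The sum $A_1+\dots+A_n$ is pseudo-direct if for every nonzero $a'\in A_1+\dots+A_n$ there are $a_i\in A_i$ with $v\sum_{i=1}^na_i=\min_iva_i$ and $v(a'-\sum_{i=1}^na_i)>va'$. For a map $g$ of ultrametric spaces, with $B(x,y)=\{z:u(x,z)\ge u(x,y)\}$, $z'$ is an attractor if for every $y$ with $z'\ne gy$ there is $z$ with $u'(gz,z')>u'(gy,z')$ and $g(B(y,z))\subseteq B(gy,z')$; $g$ is immediate if every point of the target is an attractor. *)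

theory Defs
  imports Main
begin

definition valued_ab_group :: "('a::ab_group_add \<Rightarrow> 'b::{linorder,order_top}) \<Rightarrow> bool" where
  "valued_ab_group v \<longleftrightarrow> (\<forall>a. v a = top \<longleftrightarrow> a = 0) \<and> (\<forall>a b. min (v a) (v b) \<le> v (a - b))"

definition subgroup_of :: "'a::ab_group_add set \<Rightarrow> bool" where
  "subgroup_of A \<longleftrightarrow> 0 \<in> A \<and> (\<forall>a\<in>A. \<forall>b\<in>A. a - b \<in> A)"

text \<open>Tuples (a_1,...,a_n) are functions on nat, indices 0..n-1, extended by 0.\<close>
definition prod_carrier :: "(nat \<Rightarrow> 'a::ab_group_add set) \<Rightarrow> nat \<Rightarrow> (nat \<Rightarrow> 'a) set" where
  "prod_carrier A n = {x. (\<forall>i<n. x i \<in> A i) \<and> (\<forall>i\<ge>n. x i = 0)}"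

text \<open>Minimum valuation min_i v(a_i) (equal to \<infinity> for the empty product).\<close>
definition prod_val :: "('a \<Rightarrow> 'b::{linorder,order_top}) \<Rightarrow> nat \<Rightarrow> (nat \<Rightarrow> 'a) \<Rightarrow> 'b" where
  "prod_val v n x = Min (insert top ((\<lambda>i. v (x i)) ` {..<n}))"

definition sum_set :: "(nat \<Rightarrow> 'a::ab_group_add set) \<Rightarrow> nat \<Rightarrow> 'a set" where
  "sum_set A n = {(\<Sum>i<n. x i) | x. \<forall>i<n. x i \<in> A i}"

definition pseudo_direct :: "('a::ab_group_add \<Rightarrow> 'b::{linorder,order_top}) \<Rightarrow> (nat \<Rightarrow> 'a set) \<Rightarrow> nat \<Rightarrow> bool" where
  "pseudo_direct v A n \<longleftrightarrow>
     (\<forall>a'\<in>sum_set A n. a' \<noteq> 0 \<longrightarrow>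
        (\<exists>x. (\<forall>i<n. x i \<in> A i) \<and> v (\<Sum>i<n. x i) = prod_val v n x
             \<and> v a' < v (a' - (\<Sum>i<n. x i))))"

definition um_ball :: "'x set \<Rightarrow> ('x \<Rightarrow> 'x \<Rightarrow> 'b::linorder) \<Rightarrow> 'x \<Rightarrow> 'x \<Rightarrow> 'x set" where
  "um_ball X u x y = {z\<in>X. u x y \<le> u x z}"

definition attractor ::
  "'x set \<Rightarrow> ('x \<Rightarrow> 'x \<Rightarrow> 'b::linorder) \<Rightarrow> 'y set \<Rightarrow> ('y \<Rightarrow> 'y \<Rightarrow> 'b) \<Rightarrow> ('x \<Rightarrow> 'y) \<Rightarrow> 'y \<Rightarrow> bool" where
  "attractor X u Y u' g z' \<longleftrightarrow>
     (\<forall>y\<in>X. z' \<noteq> g y \<longrightarrow>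
        (\<exists>z\<in>X. u' (g y) z' < u' (g z) z' \<and> g ` um_ball X u y z \<subseteq> um_ball Y u' (g y) z'))"

definition immediate ::
  "'x set \<Rightarrow> ('x \<Rightarrow> 'x \<Rightarrow> 'b::linorder) \<Rightarrow> 'y set \<Rightarrow> ('y \<Rightarrow> 'y \<Rightarrow> 'b) \<Rightarrow> ('x \<Rightarrow> 'y) \<Rightarrow> bool" where
  "immediate X u Y u' g \<longleftrightarrow> (\<forall>z'\<in>Y. attractor X u Y u' g z')"

end

theory Submission
  imports Defs
begin

context
  fixes v :: "'a::ab_group_add \<Rightarrow> 'b::{linorder,order_top}"
  assumes V: "valued_ab_group v"
begin

lemma v0: "v 0 = top" using V unfolding valued_ab_group_def by blast

lemma vdiff: "min (v a) (v b) \<le> v (a - b)" using V unfolding valued_ab_group_def by blast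

lemma vneg: "v (- a) = v a"
proof -
  have "min (v 0) (v a) \<le> v (0 - a)" by (rule vdiff)
  hence 1: "v a \<le> v (- a)" by (simp add: v0)
  have "min (v 0) (v (-a)) \<le> v (0 - - a)" by (rule vdiff)
  hence "v (-a) \<le> v a" by (simp add: v0)
  with 1 show ?thesis by simp
qed

lemma vadd: "min (v a) (v b) \<le> v (a + b)"
  using vdiff[of a "-b"] by (simp add: vneg)

lemma vsym: "v (a - b) = v (b - a)"
  using vneg[of "a - b"] by simp

lemma veq: assumes "v a < v (a - b)" shows "v b = v a"
proof -
  have "min (v a) (v (a - b)) \<le> v (a - (a - b))" by (rule vdiff)
  hence 1: "v a \<le> v b" using assms by simp
  have "min (v (a - b)) (v b) \<le> v ((a - b) + b)" by (rule vadd)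
  hence "min (v (a - b)) (v b) \<le> v a" by simp
  hence "v b \<le> v a" using assms by (auto simp: min_def split: if_splits)
  with 1 show ?thesis by simp
qed

lemma pv_ge_iff: "m \<le> prod_val v n x \<longleftrightarrow> (\<forall>i<n. m \<le> v (x i))"
  unfolding prod_val_def by (subst Min_ge_iff) auto

lemma pv_le: "i < n \<Longrightarrow> prod_val v n x \<le> v (x i)"
  using pv_ge_iff[of "prod_val v n x" n x] by auto

lemma pv_cong: "(\<And>i. i < n \<Longrightarrow> v (x i) = v (y i)) \<Longrightarrow> prod_val v n x = prod_val v n y"
  unfolding prod_val_def by (metis (mono_tags, lifting) image_cong lessThan_iff)

lemma pv_in: assumes "prod_val v n x \<noteq> top" shows "\<exists>i<n. prod_val v n x = v (x i)"
proof -
  have "prod_val v n x \<in> insert top ((\<lambda>i. v (x i)) ` {..<n})"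
    unfolding prod_val_def by (rule Min_in) auto
  with assms show ?thesis by auto
qed

lemma vsum: "prod_val v n x \<le> v (\<Sum>i<n. x i)"
proof (induction n)
  case 0 then show ?case by (simp add: v0)
next
  case (Suc n)
  have a: "prod_val v (Suc n) x \<le> prod_val v n x"
    using pv_ge_iff[of "prod_val v (Suc n) x" "Suc n" x] pv_ge_iff[of _ n x] by auto
  have b: "prod_val v (Suc n) x \<le> v (x n)" by (rule pv_le) simp
  have "min (v (\<Sum>i<n. x i)) (v (x n)) \<le> v ((\<Sum>i<n. x i) + x n)" by (rule vadd)
  thus ?case using a b Suc by (auto simp: min_def split: if_splits)
qed

end

lemma sg0: "subgroup_of A \<Longrightarrow> 0 \<in> A" unfolding subgroup_of_def by blast
lemma sgdiff: "subgroup_of A \<Longrightarrow> a \<in> A \<Longrightarrow> b \<in> A \<Longrightarrow> a - b \<in> A" unfolding subgroup_of_def by blast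
lemma sgadd: "subgroup_of A \<Longrightarrow> a \<in> A \<Longrightarrow> b \<in> A \<Longrightarrow> a + b \<in> A"
  using sgdiff[of A a "-b"] sgdiff[of A 0 b] sg0[of A] by simp

theorem proposition64:
  fixes v :: "'a::ab_group_add \<Rightarrow> 'b::{linorder,order_top}"
    and A :: "nat \<Rightarrow> 'a set" and n :: nat
  assumes "valued_ab_group v"
    and "\<forall>i<n. subgroup_of (A i)"
  shows "pseudo_direct v A n \<longleftrightarrow>
    immediate (prod_carrier A n) (\<lambda>x y. prod_val v n (\<lambda>i. x i - y i))
              (sum_set A n) (\<lambda>a b. v (a - b))
              (\<lambda>x. \<Sum>i<n. x i)"
proof
  assume pd: "pseudo_direct v A n"
  show "immediate (prod_carrier A n) (\<lambda>x y. prod_val v n (\<lambda>i. x i - y i))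
              (sum_set A n) (\<lambda>a b. v (a - b)) (\<lambda>x. \<Sum>i<n. x i)"
    unfolding immediate_def attractor_def
  proof (intro ballI impI)
    fix z' y assume z': "z' \<in> sum_set A n" and y: "y \<in> prod_carrier A n"
      and ne: "z' \<noteq> (\<Sum>i<n. y i)"
    obtain t where t: "\<forall>i<n. t i \<in> A i" and zt: "z' = (\<Sum>i<n. t i)"
      using z' unfolding sum_set_def by blast
    define a' where "a' = z' - (\<Sum>i<n. y i)"
    have a'eq: "a' = (\<Sum>i<n. t i - y i)" unfolding a'_def zt by (simp add: sum_subtractf)
    have "\<forall>i<n. t i - y i \<in> A i"
      using t y assms(2) sgdiff unfolding prod_carrier_def by blast
    hence "a' \<in> sum_set A n" unfolding sum_set_def a'eq by blast
    moreover have "a' \<noteq> 0" using ne unfolding a'_def by simp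
    ultimately obtain x where x: "\<forall>i<n. x i \<in> A i" and x1: "v (\<Sum>i<n. x i) = prod_val v n x"
      and x2: "v a' < v (a' - (\<Sum>i<n. x i))"
      using pd unfolding pseudo_direct_def by blast
    have vx: "v (\<Sum>i<n. x i) = v a'" using veq[OF assms(1) x2] .
    define z where "z = (\<lambda>i. if i < n then y i + x i else 0)"
    have zX: "z \<in> prod_carrier A n" unfolding z_def prod_carrier_def
      using x y assms(2) unfolding prod_carrier_def by (auto intro: sgadd)
    have gz: "(\<Sum>i<n. z i) = (\<Sum>i<n. y i) + (\<Sum>i<n. x i)"
      unfolding z_def by (simp add: sum.distrib)
    have uyz: "prod_val v n (\<lambda>i. y i - z i) = prod_val v n x"
      by (rule pv_cong[OF assms(1)]) (simp add: z_def vneg[OF assms(1)])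
    show "\<exists>z\<in>prod_carrier A n. v ((\<Sum>i<n. y i) - z') < v ((\<Sum>i<n. z i) - z') \<and>
       (\<lambda>x. \<Sum>i<n. x i) ` um_ball (prod_carrier A n) (\<lambda>x y. prod_val v n (\<lambda>i. x i - y i)) y z
       \<subseteq> um_ball (sum_set A n) (\<lambda>a b. v (a - b)) (\<Sum>i<n. y i) z'"
    proof (intro bexI conjI)
      have "v ((\<Sum>i<n. y i) - z') = v a'" unfolding a'_def by (rule vsym[OF assms(1)])
      moreover have "v ((\<Sum>i<n. z i) - z') = v (a' - (\<Sum>i<n. x i))"
        unfolding gz a'_def by (rule vsym[OF assms(1), THEN trans]) (simp add: algebra_simps)
      ultimately show "v ((\<Sum>i<n. y i) - z') < v ((\<Sum>i<n. z i) - z')" using x2 by simp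
      show "(\<lambda>x. \<Sum>i<n. x i) ` um_ball (prod_carrier A n) (\<lambda>x y. prod_val v n (\<lambda>i. x i - y i)) y z
       \<subseteq> um_ball (sum_set A n) (\<lambda>a b. v (a - b)) (\<Sum>i<n. y i) z'"
      proof
        fix b assume "b \<in> (\<lambda>x. \<Sum>i<n. x i) ` um_ball (prod_carrier A n) (\<lambda>x y. prod_val v n (\<lambda>i. x i - y i)) y z"
        then obtain w where w: "w \<in> prod_carrier A n" and wb: "prod_val v n x \<le> prod_val v n (\<lambda>i. y i - w i)"
          and b: "b = (\<Sum>i<n. w i)"
          unfolding um_ball_def uyz by auto
        have "b \<in> sum_set A n" using w unfolding b sum_set_def prod_carrier_def by auto
        moreover have "v ((\<Sum>i<n. y i) - z') \<le> v ((\<Sum>i<n. y i) - b)"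
        proof -
          have "v ((\<Sum>i<n. y i) - z') = v a'" unfolding a'_def by (rule vsym[OF assms(1)])
          also have "\<dots> = prod_val v n x" using vx x1 by simp
          also have "\<dots> \<le> prod_val v n (\<lambda>i. y i - w i)" by (rule wb)
          also have "\<dots> \<le> v (\<Sum>i<n. y i - w i)" by (rule vsum[OF assms(1)])
          also have "(\<Sum>i<n. y i - w i) = (\<Sum>i<n. y i) - b" unfolding b by (simp add: sum_subtractf)
          finally show ?thesis .
        qed
        ultimately show "b \<in> um_ball (sum_set A n) (\<lambda>a b. v (a - b)) (\<Sum>i<n. y i) z'"
          unfolding um_ball_def by simp
      qed
    qed (rule zX)
  qed
next
  assume im: "immediate (prod_carrier A n) (\<lambda>x y. prod_val v n (\<lambda>i. x i - y i))
              (sum_set A n) (\<lambda>a b. v (a - b)) (\<lambda>x. \<Sum>i<n. x i)"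
  show "pseudo_direct v A n" unfolding pseudo_direct_def
  proof (intro ballI impI)
    fix a' assume a': "a' \<in> sum_set A n" and ne: "a' \<noteq> 0"
    have X0: "(\<lambda>i. 0) \<in> prod_carrier A n" unfolding prod_carrier_def using assms(2) sg0 by auto
    from im a' X0 ne obtain z where zX: "z \<in> prod_carrier A n"
      and z1: "v (0 - a') < v ((\<Sum>i<n. z i) - a')"
      and z2: "(\<lambda>x. \<Sum>i<n. x i) ` um_ball (prod_carrier A n) (\<lambda>x y. prod_val v n (\<lambda>i. x i - y i)) (\<lambda>i. 0) z
       \<subseteq> um_ball (sum_set A n) (\<lambda>a b. v (a - b)) 0 a'"
      unfolding immediate_def attractor_def by force
    have z1': "v a' < v (a' - (\<Sum>i<n. z i))"
      using z1 vneg[OF assms(1), of a'] vsym[OF assms(1), of "(\<Sum>i<n. z i)" a'] by simp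
    have vz: "v (\<Sum>i<n. z i) = v a'" using veq[OF assms(1) z1'] .
    have u0: "\<And>w. prod_val v n (\<lambda>i. 0 - w i) = prod_val v n w"
      by (rule pv_cong[OF assms(1)]) (simp add: vneg[OF assms(1)])
    have "v (\<Sum>i<n. z i) \<le> prod_val v n z"
    proof (cases "prod_val v n z = top")
      case True then show ?thesis by simp
    next
      case False
      then obtain i where i: "i < n" and m: "prod_val v n z = v (z i)" using pv_in[OF assms(1)] by blast
      define w where "w = (\<lambda>j. if j = i then z i else 0)"
      have wX: "w \<in> prod_carrier A n" unfolding w_def prod_carrier_def
        using zX i assms(2) sg0 unfolding prod_carrier_def by auto
      have "prod_val v n z \<le> prod_val v n w"
        unfolding pv_ge_iff[OF assms(1)] m w_def by (auto simp: v0[OF assms(1)])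
      hence "w \<in> um_ball (prod_carrier A n) (\<lambda>x y. prod_val v n (\<lambda>i. x i - y i)) (\<lambda>i. 0) z"
        unfolding um_ball_def u0 using wX by simp
      hence "(\<Sum>j<n. w j) \<in> um_ball (sum_set A n) (\<lambda>a b. v (a - b)) 0 a'" using z2 by blast
      moreover have "(\<Sum>j<n. w j) = z i" unfolding w_def using i by (simp add: sum.delta)
      ultimately have "v (0 - a') \<le> v (0 - z i)" unfolding um_ball_def by simp
      hence "v a' \<le> v (z i)" by (simp add: vneg[OF assms(1)])
      thus ?thesis using vz m by simp
    qed
    moreover have "prod_val v n z \<le> v (\<Sum>i<n. z i)" by (rule vsum[OF assms(1)])
    ultimately have "v (\<Sum>i<n. z i) = prod_val v n z" by simp
    moreover have "\<forall>i<n. z i \<in> A i" using zX unfolding prod_carrier_def by simp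
    ultimately show "\<exists>x. (\<forall>i<n. x i \<in> A i) \<and> v (\<Sum>i<n. x i) = prod_val v n x \<and>
             v a' < v (a' - (\<Sum>i<n. x i))" using z1' by blast
  qed
qed

end
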